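(* Let $A$ be a Banach algebra which does not consist entirely of right (resp. left) topological divisors of zero. If $A$ has a left (resp. right) approximate identity (not necessarily bounded), then $A$ has a left (resp. right) unit. In particular, if moreover $A$ is commutative, then $A$ is unital. *)

theory Defs
  imports "HOL-Analysis.Analysis"
begin

text \<open>Banach algebras are modelled by the type class combination
  real_normed_algebra + banach (associative, not necessarily unital or commutative,
  with submultiplicative norm, complete).\<close>

definition right_top_zero_divisor :: "'a::real_normed_algebra \<Rightarrow> bool" where
  "right_top_zero_divisor a \<longleftrightarrow>
     (\<exists>z::nat \<Rightarrow> 'a. (\<forall>n. norm (z n) = 1) \<and> (\<lambda>n. z n * a) \<longlonglongrightarrow> 0)"

definition left_top_zero_divisor :: "'a::real_normed_algebra \<Rightarrow> bool" where
  "left_top_zero_divisor a \<longleftrightarrow>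
     (\<exists>z::nat \<Rightarrow> 'a. (\<forall>n. norm (z n) = 1) \<and> (\<lambda>n. a * z n) \<longlonglongrightarrow> 0)"

text \<open>A (not necessarily bounded) left approximate identity: a net (e_i) along a
  proper filter F (nets over directed sets are the special case F = at_top) such that
  e_i x tends to x for every x.\<close>
definition left_approx_identity :: "('i \<Rightarrow> 'a::real_normed_algebra) \<Rightarrow> 'i filter \<Rightarrow> bool" where
  "left_approx_identity e F \<longleftrightarrow> F \<noteq> bot \<and> (\<forall>x. ((\<lambda>i. e i * x) \<longlongrightarrow> x) F)"

definition right_approx_identity :: "('i \<Rightarrow> 'a::real_normed_algebra) \<Rightarrow> 'i filter \<Rightarrow> bool" where
  "right_approx_identity e F \<longleftrightarrow> F \<noteq> bot \<and> (\<forall>x. ((\<lambda>i. x * e i) \<longlongrightarrow> x) F)"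

end

theory Submission
  imports Defs
begin

lemma bounded_below:
  fixes T :: "'a::real_normed_vector \<Rightarrow> 'a"
  assumes lin: "linear T"
    and nz: "\<not> (\<exists>z::nat \<Rightarrow> 'a. (\<forall>n. norm (z n) = 1) \<and> (\<lambda>n. T (z n)) \<longlonglongrightarrow> 0)"
  shows "\<exists>c>0. \<forall>z. c * norm z \<le> norm (T z)"
proof (rule ccontr)
  assume "\<not> ?thesis"
  hence H: "\<forall>c>0. \<exists>z. norm (T z) < c * norm z" by (meson not_le)
  have "\<forall>n. \<exists>w. norm w = 1 \<and> norm (T w) < 1 / real (Suc n)"
  proof
    fix n
    have "1 / real (Suc n) > 0" by simp
    then obtain z where z: "norm (T z) < (1 / real (Suc n)) * norm z" using H by blast
    have zn: "norm z > 0" proof (rule ccontr)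
      assume "\<not> norm z > 0" hence "norm z = 0" by simp
      with z norm_ge_zero[of "T z"] show False by simp
    qed
    define w where "w = (1 / norm z) *\<^sub>R z"
    have "norm w = 1" using zn by (simp add: w_def)
    moreover have "norm (T w) = norm (T z) / norm z"
      using zn by (simp add: w_def linear_scale[OF lin])
    moreover have "norm (T z) / norm z < 1 / real (Suc n)" using z zn
      by (simp add: divide_less_eq)
    ultimately show "\<exists>w. norm w = 1 \<and> norm (T w) < 1 / real (Suc n)" by metis
  qed
  then obtain w where w: "\<And>n. norm (w n) = 1" "\<And>n. norm (T (w n)) < 1 / real (Suc n)"
    by metis
  have "(\<lambda>n. T (w n)) \<longlonglongrightarrow> 0" by (rule LIMSEQ_norm_0) (use w in auto)
  with w(1) nz show False by blast
qed

lemma net_converges: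
  fixes T :: "'a::banach \<Rightarrow> 'a"
  assumes bl: "bounded_linear T" and c: "c > 0" and below: "\<And>z. c * norm z \<le> norm (T z)"
    and F: "F \<noteq> bot" and lim: "((\<lambda>i. T (e i)) \<longlongrightarrow> a) F"
  shows "\<exists>u. (e \<longlongrightarrow> u) F"
proof -
  interpret bounded_linear T by fact
  have ex: "\<forall>n. \<exists>z. norm (T z - a) < 1 / real (Suc n)"
  proof
    fix n
    have "eventually (\<lambda>i. dist (T (e i)) a < 1 / real (Suc n)) F"
      using lim by (simp add: tendsto_iff)
    then obtain i where "dist (T (e i)) a < 1 / real (Suc n)"
      using F eventually_happens' by blast
    thus "\<exists>z. norm (T z - a) < 1 / real (Suc n)" by (auto simp: dist_norm)
  qed
  then obtain z where z: "\<And>n. norm (T (z n) - a) < 1 / real (Suc n)" by metis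
  have Tz: "(\<lambda>n. T (z n)) \<longlonglongrightarrow> a"
  proof -
    have "(\<lambda>n. T (z n) - a) \<longlonglongrightarrow> 0" by (rule LIMSEQ_norm_0) (use z in auto)
    thus ?thesis by (simp add: LIM_zero_iff)
  qed
  have "Cauchy (\<lambda>n. T (z n))" using Tz by (rule LIMSEQ_imp_Cauchy)
  have "Cauchy z"
  proof (rule metric_CauchyI)
    fix \<epsilon> :: real assume "\<epsilon> > 0"
    hence "c * \<epsilon> > 0" using c by simp
    then obtain M where M: "\<forall>m\<ge>M. \<forall>n\<ge>M. dist (T (z m)) (T (z n)) < c * \<epsilon>"
      using \<open>Cauchy (\<lambda>n. T (z n))\<close> unfolding Cauchy_def by blast
    show "\<exists>M. \<forall>m\<ge>M. \<forall>n\<ge>M. dist (z m) (z n) < \<epsilon>"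
    proof (intro exI allI impI)
      fix m n assume "m \<ge> M" "n \<ge> M"
      hence "norm (T (z m) - T (z n)) < c * \<epsilon>" using M by (simp add: dist_norm)
      moreover have "c * norm (z m - z n) \<le> norm (T (z m) - T (z n))"
        using below[of "z m - z n"] by (simp add: diff)
      ultimately have "c * norm (z m - z n) < c * \<epsilon>" by linarith
      thus "dist (z m) (z n) < \<epsilon>" using c by (simp add: dist_norm)
    qed
  qed
  hence "convergent z" by (rule Cauchy_convergent)
  then obtain u where u: "z \<longlonglongrightarrow> u" unfolding convergent_def by blast
  have "(\<lambda>n. T (z n)) \<longlonglongrightarrow> T u" using u by (rule tendsto)
  from LIMSEQ_unique[OF this Tz] have Tu: "T u = a" .
  have "((\<lambda>i. e i - u) \<longlongrightarrow> 0) F"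
  proof (rule tendsto_norm_zero_cancel)
    have G: "((\<lambda>i. norm (T (e i) - a) / c) \<longlongrightarrow> 0) F"
    proof -
      have "((\<lambda>i. T (e i) - a) \<longlongrightarrow> 0) F" using lim by (simp add: LIM_zero_iff)
      hence "((\<lambda>i. norm (T (e i) - a)) \<longlongrightarrow> 0) F" by (rule tendsto_norm_zero)
      thus ?thesis by (rule tendsto_divide_zero)
    qed
    have B: "\<And>i. norm (norm (e i - u)) \<le> norm (T (e i) - a) / c"
    proof -
      fix i
      have "c * norm (e i - u) \<le> norm (T (e i) - a)"
        using below[of "e i - u"] by (simp add: diff Tu)
      thus "norm (norm (e i - u)) \<le> norm (T (e i) - a) / c" using c
        by (simp add: le_divide_eq mult.commute)
    qed
    show "((\<lambda>i. norm (e i - u)) \<longlongrightarrow> 0) F"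
      by (rule Lim_null_comparison[OF always_eventually]) (rule allI, rule B, rule G)
  qed
  hence "(e \<longlongrightarrow> u) F" by (simp add: LIM_zero_iff)
  thus ?thesis by blast
qed

lemma left_part:
  fixes a :: "'a::{real_normed_algebra, banach}" and e :: "'i \<Rightarrow> 'a"
  assumes na: "\<not> right_top_zero_divisor a" and li: "left_approx_identity e F"
  shows "\<exists>u::'a. \<forall>x. u * x = x"
proof -
  have lin: "bounded_linear (\<lambda>z. z * a)" by (rule bounded_linear_mult_left)
  obtain c where c: "c > 0" "\<And>z. c * norm z \<le> norm (z * a)"
  proof -
    have "linear (\<lambda>z. z * a)" using lin by (rule bounded_linear.linear)
    moreover have "\<not> (\<exists>z::nat \<Rightarrow> 'a. (\<forall>n. norm (z n) = 1) \<and> (\<lambda>n. (\<lambda>z. z * a) (z n)) \<longlonglongrightarrow> 0)"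
      using na unfolding right_top_zero_divisor_def by simp
    ultimately have "\<exists>c>0. \<forall>z. c * norm z \<le> norm ((\<lambda>z. z * a) z)" by (rule bounded_below)
    thus ?thesis using that by auto
  qed
  have F: "F \<noteq> bot" and L: "\<And>x. ((\<lambda>i. e i * x) \<longlongrightarrow> x) F"
    using li unfolding left_approx_identity_def by auto
  obtain u where u: "(e \<longlongrightarrow> u) F" using net_converges[OF lin c F L[of a]] by blast
  have "\<forall>x. u * x = x"
  proof
    fix x
    have "((\<lambda>i. e i * x) \<longlongrightarrow> u * x) F" using u by (intro tendsto_intros)
    with L[of x] F show "u * x = x" using tendsto_unique[OF F] by blast
  qed
  thus ?thesis by blast
qed

lemma right_part:
  fixes a :: "'a::{real_normed_algebra, banach}" and e :: "'i \<Rightarrow> 'a"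
  assumes na: "\<not> left_top_zero_divisor a" and li: "right_approx_identity e F"
  shows "\<exists>u::'a. \<forall>x. x * u = x"
proof -
  have lin: "bounded_linear (\<lambda>z. a * z)" by (rule bounded_linear_mult_right)
  obtain c where c: "c > 0" "\<And>z. c * norm z \<le> norm (a * z)"
  proof -
    have "linear (\<lambda>z. a * z)" using lin by (rule bounded_linear.linear)
    moreover have "\<not> (\<exists>z::nat \<Rightarrow> 'a. (\<forall>n. norm (z n) = 1) \<and> (\<lambda>n. (\<lambda>z. a * z) (z n)) \<longlonglongrightarrow> 0)"
      using na unfolding left_top_zero_divisor_def by simp
    ultimately have "\<exists>c>0. \<forall>z. c * norm z \<le> norm ((\<lambda>z. a * z) z)" by (rule bounded_below)
    thus ?thesis using that by auto
  qed
  have F: "F \<noteq> bot" and L: "\<And>x. ((\<lambda>i. x * e i) \<longlongrightarrow> x) F"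
    using li unfolding right_approx_identity_def by auto
  obtain u where u: "(e \<longlongrightarrow> u) F" using net_converges[OF lin c F L[of a]] by blast
  have "\<forall>x. x * u = x"
  proof
    fix x
    have "((\<lambda>i. x * e i) \<longlongrightarrow> x * u) F" using u by (intro tendsto_intros)
    with L[of x] F show "x * u = x" using tendsto_unique[OF F] by blast
  qed
  thus ?thesis by blast
qed

theorem mainTheorem5:
  fixes e_type :: "'i itself"
    and a_type :: "'a::{real_normed_algebra, banach} itself"
  shows
   "((\<not> (\<forall>a::'a. right_top_zero_divisor a)) \<and>
        (\<exists>(e::'i \<Rightarrow> 'a) F. left_approx_identity e F)
      \<longrightarrow> (\<exists>u::'a. \<forall>x. u * x = x))
    \<and> ((\<not> (\<forall>a::'a. left_top_zero_divisor a)) \<and>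
        (\<exists>(e::'i \<Rightarrow> 'a) F. right_approx_identity e F)
      \<longrightarrow> (\<exists>u::'a. \<forall>x. x * u = x))
    \<and> ((\<forall>x y::'a. x * y = y * x) \<and> (\<not> (\<forall>a::'a. right_top_zero_divisor a)) \<and>
        (\<exists>(e::'i \<Rightarrow> 'a) F. left_approx_identity e F)
      \<longrightarrow> (\<exists>u::'a. \<forall>x. u * x = x \<and> x * u = x))"
proof (intro conjI impI)
  assume "(\<not> (\<forall>a::'a. right_top_zero_divisor a)) \<and> (\<exists>(e::'i \<Rightarrow> 'a) F. left_approx_identity e F)"
  then obtain a :: 'a and e :: "'i \<Rightarrow> 'a" and F where "\<not> right_top_zero_divisor a" "left_approx_identity e F" by blast
  thus "\<exists>u::'a. \<forall>x. u * x = x" by (rule left_part)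
next
  assume "(\<not> (\<forall>a::'a. left_top_zero_divisor a)) \<and> (\<exists>(e::'i \<Rightarrow> 'a) F. right_approx_identity e F)"
  then obtain a :: 'a and e :: "'i \<Rightarrow> 'a" and F where "\<not> left_top_zero_divisor a" "right_approx_identity e F" by blast
  thus "\<exists>u::'a. \<forall>x. x * u = x" by (rule right_part)
next
  assume H: "(\<forall>x y::'a. x * y = y * x) \<and> (\<not> (\<forall>a::'a. right_top_zero_divisor a)) \<and> (\<exists>(e::'i \<Rightarrow> 'a) F. left_approx_identity e F)"
  then obtain a :: 'a and e :: "'i \<Rightarrow> 'a" and F where "\<not> right_top_zero_divisor a" "left_approx_identity e F" by blast
  then obtain u :: 'a where u: "\<forall>x. u * x = x" by (blast dest: left_part)
  have C: "\<forall>x y::'a. x * y = y * x" using H by blast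
  have "\<forall>x. u * x = x \<and> x * u = x"
  proof
    fix x :: 'a
    have "x * u = u * x" using C by blast
    thus "u * x = x \<and> x * u = x" using u by simp
  qed
  thus "\<exists>u::'a. \<forall>x. u * x = x \<and> x * u = x" by blast
qed

end
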